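(* Let $\delta,\alpha\geq0$, $\sigma\in\mathbb{R}$, $\varepsilon\in(0,1)$, and assume $\delta\leq\theta\leq\alpha$. Let $\widehat{v}(t,\xi)$ solve $(1+|\xi|^{2\delta})\widehat{v}_{tt}+|\xi|^{2\theta}\widehat{v}_t+|\xi|^{2\alpha}\widehat{v}=0$, and define for $|\xi|\geq\varepsilon$ $$\rho(\xi)=\begin{cases}\dfrac{\varepsilon^{2\alpha+2\delta-4\theta}|\xi|^{2\theta}}{2(1+|\xi|^{2\delta})}&\text{if }\alpha+\delta\geq2\theta,\\[2mm] \dfrac{\varepsilon^{-2\alpha+4\theta}|\xi|^{2\alpha-2\theta}}{4}&\text{if }\alpha+\delta<2\theta,\end{cases}$$ $E_1(t,\xi)=\frac12|\xi|^{2\delta+\sigma}|\widehat{v}_t|^2+\frac12|\xi|^{2\alpha+\sigma}|\widehat{v}|^2$ and $F(t,\xi)=|\xi|^{2\theta+\sigma}|\widehat{v}_t|^2+\rho(\xi)|\xi|^{2\alpha+\sigma}|\widehat{v}|^2$. Then $E_1(t,\xi)\lesssim F(t,\xi)$ for all $t\geq0$ and $|\xi|\geq\varepsilon$.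
   Context: $\lesssim$ means $\leq C\cdot$ with $C>0$ independent of $t$ and $\xi$. *)

theory Defs
  imports "HOL-Analysis.Analysis"
begin

definition rho :: "real \<Rightarrow> real \<Rightarrow> real \<Rightarrow> real \<Rightarrow> 'a::real_normed_vector \<Rightarrow> real" where
  "rho \<delta> \<theta> \<alpha> \<epsilon> \<xi> =
     (if \<alpha> + \<delta> \<ge> 2 * \<theta>
      then \<epsilon> powr (2*\<alpha> + 2*\<delta> - 4*\<theta>) * norm \<xi> powr (2*\<theta>) / (2 * (1 + norm \<xi> powr (2*\<delta>)))
      else \<epsilon> powr (-2*\<alpha> + 4*\<theta>) * norm \<xi> powr (2*\<alpha> - 2*\<theta>) / 4)"

definition E1 :: "real \<Rightarrow> real \<Rightarrow> real \<Rightarrow> 'a::real_normed_vector \<Rightarrow> complex \<Rightarrow> complex \<Rightarrow> real" where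
  "E1 \<delta> \<alpha> \<sigma> \<xi> v vt =
     1/2 * norm \<xi> powr (2*\<delta> + \<sigma>) * (cmod vt)^2 + 1/2 * norm \<xi> powr (2*\<alpha> + \<sigma>) * (cmod v)^2"

definition Fen :: "real \<Rightarrow> real \<Rightarrow> real \<Rightarrow> real \<Rightarrow> real \<Rightarrow> 'a::real_normed_vector \<Rightarrow> complex \<Rightarrow> complex \<Rightarrow> real" where
  "Fen \<delta> \<theta> \<alpha> \<sigma> \<epsilon> \<xi> v vt =
     norm \<xi> powr (2*\<theta> + \<sigma>) * (cmod vt)^2 + rho \<delta> \<theta> \<alpha> \<epsilon> \<xi> * norm \<xi> powr (2*\<alpha> + \<sigma>) * (cmod v)^2"

end

theory Submission
  imports Defs
begin

lemma pow_le_aux: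
  fixes r \<epsilon> \<delta> \<theta> :: real
  assumes "0 < \<epsilon>" "\<epsilon> \<le> r" "\<delta> \<le> \<theta>"
  shows "r powr (2*\<delta>) \<le> \<epsilon> powr (2*\<delta> - 2*\<theta>) * r powr (2*\<theta>)"
proof -
  have r0: "0 < r" using assms by linarith
  have "r powr (2*\<delta>) = r powr (2*\<delta> - 2*\<theta>) * r powr (2*\<theta>)"
    by (simp add: powr_add[symmetric])
  also have "\<dots> \<le> \<epsilon> powr (2*\<delta> - 2*\<theta>) * r powr (2*\<theta>)"
    apply (rule mult_right_mono)
    apply (rule powr_mono2') using assms by auto
  finally show ?thesis .
qed

lemma rho_lb:
  fixes \<delta> \<alpha> \<theta> \<epsilon> :: real
  assumes "\<delta> \<ge> 0" "0 < \<epsilon>" "\<epsilon> < 1" "\<delta> \<le> \<theta>" "\<theta> \<le> \<alpha>"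
  shows "\<exists>m>0. \<forall>\<xi>::'a::real_normed_vector. norm \<xi> \<ge> \<epsilon> \<longrightarrow> rho \<delta> \<theta> \<alpha> \<epsilon> \<xi> \<ge> m"
proof (cases "\<alpha> + \<delta> \<ge> 2 * \<theta>")
  case True
  define K where "K = \<epsilon> powr (2*\<alpha> + 2*\<delta> - 4*\<theta>)"
  have K0: "K > 0" unfolding K_def using assms by simp
  have lb: "norm \<xi> powr (2*\<theta>) / (1 + norm \<xi> powr (2*\<delta>)) \<ge> \<epsilon> powr (2*\<theta>) / 2"
    if h: "norm \<xi> \<ge> \<epsilon>" for \<xi> :: 'a
  proof -
    let ?r = "norm \<xi>"
    have r0: "?r > 0" using h assms by linarith
    show ?thesis
    proof (cases "?r \<ge> 1")
      case True
      have a: "?r powr (2*\<delta>) \<le> ?r powr (2*\<theta>)"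
        using True assms by (intro powr_mono) auto
      have b: "1 \<le> ?r powr (2*\<theta>)" using True assms by (simp add: ge_one_powr_ge_zero)
      have c: "\<epsilon> powr (2*\<theta>) \<le> 1" using assms by (simp add: powr_le1)
      have "1 + ?r powr (2*\<delta>) \<le> 2 * ?r powr (2*\<theta>)" using a b by linarith
      hence "1/2 \<le> ?r powr (2*\<theta>) / (1 + ?r powr (2*\<delta>))"
        by (simp add: field_simps add_pos_nonneg)
      thus ?thesis using c by linarith
    next
      case False
      have a: "?r powr (2*\<delta>) \<le> 1" using False r0 assms by (simp add: powr_le1)
      have b: "\<epsilon> powr (2*\<theta>) \<le> ?r powr (2*\<theta>)"
        using h assms by (intro powr_mono2) auto
      have d: "0 < 1 + ?r powr (2*\<delta>)" by (simp add: add_pos_nonneg)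
      have "\<epsilon> powr (2*\<theta>) / 2 \<le> ?r powr (2*\<theta>) / 2" using b by simp
      also have "\<dots> \<le> ?r powr (2*\<theta>) / (1 + ?r powr (2*\<delta>))"
        using a d by (intro divide_left_mono) auto
      finally show ?thesis .
    qed
  qed
  show ?thesis
  proof (intro exI[of _ "K * (\<epsilon> powr (2*\<theta>) / 2) / 2"] conjI allI impI)
    show "0 < K * (\<epsilon> powr (2*\<theta>) / 2) / 2" using K0 assms by simp
    fix \<xi> :: 'a assume h: "norm \<xi> \<ge> \<epsilon>"
    have "rho \<delta> \<theta> \<alpha> \<epsilon> \<xi> = K * (norm \<xi> powr (2*\<theta>) / (1 + norm \<xi> powr (2*\<delta>))) / 2"
      unfolding rho_def K_def using True by simp
    also have "\<dots> \<ge> K * (\<epsilon> powr (2*\<theta>) / 2) / 2"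
      using lb[OF h] K0 by (intro divide_right_mono mult_left_mono) auto
    finally show "K * (\<epsilon> powr (2*\<theta>) / 2) / 2 \<le> rho \<delta> \<theta> \<alpha> \<epsilon> \<xi>" .
  qed
next
  case False
  define K where "K = \<epsilon> powr (-2*\<alpha> + 4*\<theta>)"
  have K0: "K > 0" unfolding K_def using assms by simp
  show ?thesis
  proof (intro exI[of _ "K * \<epsilon> powr (2*\<alpha> - 2*\<theta>) / 4"] conjI allI impI)
    show "0 < K * \<epsilon> powr (2*\<alpha> - 2*\<theta>) / 4" using K0 assms by simp
    fix \<xi> :: 'a assume h: "norm \<xi> \<ge> \<epsilon>"
    have b: "\<epsilon> powr (2*\<alpha> - 2*\<theta>) \<le> norm \<xi> powr (2*\<alpha> - 2*\<theta>)"
      using h assms by (intro powr_mono2) auto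
    have "rho \<delta> \<theta> \<alpha> \<epsilon> \<xi> = K * norm \<xi> powr (2*\<alpha> - 2*\<theta>) / 4"
      unfolding rho_def K_def using False by simp
    also have "\<dots> \<ge> K * \<epsilon> powr (2*\<alpha> - 2*\<theta>) / 4"
      using b K0 by (intro divide_right_mono mult_left_mono) auto
    finally show "K * \<epsilon> powr (2*\<alpha> - 2*\<theta>) / 4 \<le> rho \<delta> \<theta> \<alpha> \<epsilon> \<xi>" .
  qed
qed

theorem lemma3p3:
  fixes \<delta> \<alpha> \<theta> \<sigma> \<epsilon> :: real
    and v vt vtt :: "real \<Rightarrow> real ^ 'n \<Rightarrow> complex"
  assumes "\<delta> \<ge> 0" and "\<alpha> \<ge> 0" and "0 < \<epsilon>" and "\<epsilon> < 1"
    and "\<delta> \<le> \<theta>" and "\<theta> \<le> \<alpha>"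
    and "\<And>t \<xi>. t \<ge> 0 \<Longrightarrow> ((\<lambda>s. v s \<xi>) has_vector_derivative vt t \<xi>) (at t within {0..})"
    and "\<And>t \<xi>. t \<ge> 0 \<Longrightarrow> ((\<lambda>s. vt s \<xi>) has_vector_derivative vtt t \<xi>) (at t within {0..})"
    and "\<And>t \<xi>. t \<ge> 0 \<Longrightarrow>
           complex_of_real (1 + norm \<xi> powr (2*\<delta>)) * vtt t \<xi>
           + complex_of_real (norm \<xi> powr (2*\<theta>)) * vt t \<xi>
           + complex_of_real (norm \<xi> powr (2*\<alpha>)) * v t \<xi> = 0"
  shows "\<exists>C>0. \<forall>t \<ge> 0. \<forall>\<xi>::real^'n. norm \<xi> \<ge> \<epsilon> \<longrightarrow>
           E1 \<delta> \<alpha> \<sigma> \<xi> (v t \<xi>) (vt t \<xi>) \<le> C * Fen \<delta> \<theta> \<alpha> \<sigma> \<epsilon> \<xi> (v t \<xi>) (vt t \<xi>)"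
proof -
  obtain m where m0: "m > 0" and mlb: "\<And>\<xi>::real^'n. norm \<xi> \<ge> \<epsilon> \<Longrightarrow> rho \<delta> \<theta> \<alpha> \<epsilon> \<xi> \<ge> m"
    using rho_lb[OF assms(1,3,4,5,6), where 'a="real^'n"] by blast
  define C where "C = max (\<epsilon> powr (2*\<delta> - 2*\<theta>)) (1/m)"
  have C0: "C > 0" unfolding C_def using assms by (simp add: less_max_iff_disj)
  show ?thesis
  proof (intro exI[of _ C] conjI allI impI C0)
    fix t :: real and \<xi> :: "real^'n"
    assume h: "norm \<xi> \<ge> \<epsilon>"
    let ?r = "norm \<xi>"
    define a where "a = (cmod (vt t \<xi>))^2"
    define b where "b = (cmod (v t \<xi>))^2"
    have a0: "a \<ge> 0" and b0: "b \<ge> 0" unfolding a_def b_def by auto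
    have r0: "?r > 0" using h assms by linarith
    have s0: "?r powr \<sigma> > 0" using r0 by simp
    have p1: "?r powr (2*\<delta>) \<le> C * ?r powr (2*\<theta>)"
      using pow_le_aux[OF assms(3) h assms(5)]
      by (rule order_trans, intro mult_right_mono) (auto simp: C_def)
    have t1: "1/2 * ?r powr (2*\<delta> + \<sigma>) * a \<le> C * (?r powr (2*\<theta> + \<sigma>) * a)"
    proof -
      have "?r powr (2*\<delta> + \<sigma>) = ?r powr (2*\<delta>) * ?r powr \<sigma>" by (simp add: powr_add)
      also have "\<dots> \<le> C * ?r powr (2*\<theta>) * ?r powr \<sigma>"
        using p1 s0 by (intro mult_right_mono) auto
      also have "\<dots> = C * ?r powr (2*\<theta> + \<sigma>)" by (simp add: powr_add)
      finally have "?r powr (2*\<delta> + \<sigma>) * a \<le> C * ?r powr (2*\<theta> + \<sigma>) * a"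
        using a0 by (intro mult_right_mono) auto
      moreover have "0 \<le> ?r powr (2*\<delta> + \<sigma>) * a" using a0 by simp
      ultimately show ?thesis by (simp add: mult.assoc)
    qed
    have Crho: "1 \<le> C * rho \<delta> \<theta> \<alpha> \<epsilon> \<xi>"
    proof -
      have "1 = (1/m) * m" using m0 by simp
      also have "\<dots> \<le> C * rho \<delta> \<theta> \<alpha> \<epsilon> \<xi>"
        using mlb[OF h] m0 C0 by (intro mult_mono) (auto simp: C_def)
      finally show ?thesis .
    qed
    have t2: "1/2 * ?r powr (2*\<alpha> + \<sigma>) * b \<le> C * (rho \<delta> \<theta> \<alpha> \<epsilon> \<xi> * ?r powr (2*\<alpha> + \<sigma>) * b)"
    proof -
      have q: "0 \<le> ?r powr (2*\<alpha> + \<sigma>) * b" using b0 by simp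
      have "1/2 * (?r powr (2*\<alpha> + \<sigma>) * b) \<le> (C * rho \<delta> \<theta> \<alpha> \<epsilon> \<xi>) * (?r powr (2*\<alpha> + \<sigma>) * b)"
        using Crho q by (intro mult_right_mono) auto
      thus ?thesis by (simp add: mult_ac)
    qed
    show "E1 \<delta> \<alpha> \<sigma> \<xi> (v t \<xi>) (vt t \<xi>) \<le> C * Fen \<delta> \<theta> \<alpha> \<sigma> \<epsilon> \<xi> (v t \<xi>) (vt t \<xi>)"
      unfolding E1_def Fen_def a_def[symmetric] b_def[symmetric]
      using t1 t2 by (simp add: distrib_left)
  qed
qed

end
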